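(* Let $\{\gamma_\Lambda\}_{\Lambda\in\mathcal{S}}$ be a specification on $(\Omega,\mathcal{F})$. Then for each $\Lambda\in\mathcal{S}$, $\Gamma\in\mathcal{S}(\Lambda^c)$ and bounded measurable functions $f,g$ on $\Omega$, $$\gamma_{\Lambda\cup\Gamma}\bigl[f\,\gamma_\Lambda(\gamma_\Gamma(g))\bigr]=\gamma_{\Lambda\cup\Gamma}\bigl[g\,\gamma_\Gamma(\gamma_\Lambda(f))\bigr].$$
   Context: $(E,\mathcal{E})$ is a measurable space, $\Omega=E^{\mathbb{Z}^d}$ with product $\sigma$-algebra $\mathcal{F}$; for $U\subset\mathbb{Z}^d$, $\mathcal{F}_U$ is the $\sigma$-algebra generated by the coordinates in $U$, $U^c$ the complement, $\mathcal{S}(U)$ the finite subsets of $U$, $\mathcal{S}=\mathcal{S}(\mathbb{Z}^d)$. For a kernel $\gamma$ and bounded measurable $f$, $\gamma(f)(\omega)=\int f(\eta)\gamma(d\eta\mid\omega)$; $(\gamma\tilde\gamma)(f)=\gamma(\tilde\gamma(f))$. A specification is a family of probability kernels $\{\gamma_\Lambda\}_{\Lambda\in\mathcal{S}}$ such that for all $\Lambda\in\mathcal{S}$: $\gamma_\Lambda(A\mid\cdot)$ is $\mathcal{F}_{\Lambda^c}$-measurable for $A\in\mathcal{F}$; $\gamma_\Lambda(B\mid\omega)=\mathbf 1_B(\omega)$ for $B\in\mathcal{F}_{\Lambda^c}$; $\gamma_\Delta\gamma_\Lambda=\gamma_\Delta$ for all $\Delta\in\mathcal{S}$ with $\Delta\supset\Lambda$.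 *)

theory Defs
  imports "HOL-Probability.Probability"
begin

text \<open>Configuration space \<Omega> = E^(Z^d) with the product sigma-algebra.
  Sites of Z^d are vectors int^'d, 'd a finite type with CARD('d) = d.\<close>

type_synonym ('e, 'd) config = "(int ^ 'd) \<Rightarrow> 'e"

definition Omega :: "'e measure \<Rightarrow> ('e, 'd::finite) config measure" where
  "Omega E = PiM UNIV (\<lambda>_. E)"

definition F_sub :: "'e measure \<Rightarrow> (int ^ 'd::finite) set \<Rightarrow> ('e, 'd) config measure" where
  "F_sub E U = sigma (space (Omega E))
     {(\<lambda>\<omega>. \<omega> i) -` B \<inter> space (Omega E) | i B. i \<in> U \<and> B \<in> sets E}"

definition prob_kernel :: "'e measure \<Rightarrow> (('e, 'd::finite) config \<Rightarrow> ('e, 'd) config measure) \<Rightarrow> bool" where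
  "prob_kernel E k \<longleftrightarrow>
     (\<forall>\<omega>\<in>space (Omega E). prob_space (k \<omega>) \<and> sets (k \<omega>) = sets (Omega E)) \<and>
     (\<forall>A\<in>sets (Omega E). (\<lambda>\<omega>. measure (k \<omega>) A) \<in> borel_measurable (Omega E))"

definition kapply :: "(('e, 'd::finite) config \<Rightarrow> ('e, 'd) config measure) \<Rightarrow>
     (('e, 'd) config \<Rightarrow> real) \<Rightarrow> ('e, 'd) config \<Rightarrow> real" where
  "kapply k f \<omega> = (\<integral>\<eta>. f \<eta> \<partial>(k \<omega>))"

definition is_specification :: "'e measure \<Rightarrow>
     ((int ^ 'd::finite) set \<Rightarrow> ('e, 'd) config \<Rightarrow> ('e, 'd) config measure) \<Rightarrow> bool" where
  "is_specification E \<gamma> \<longleftrightarrow>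
    (\<forall>\<Lambda>. finite \<Lambda> \<longrightarrow>
       prob_kernel E (\<gamma> \<Lambda>) \<and>
       (\<forall>A\<in>sets (Omega E). (\<lambda>\<omega>. measure (\<gamma> \<Lambda> \<omega>) A) \<in> borel_measurable (F_sub E (- \<Lambda>))) \<and>
       (\<forall>B\<in>sets (F_sub E (- \<Lambda>)). \<forall>\<omega>\<in>space (Omega E). measure (\<gamma> \<Lambda> \<omega>) B = indicator B \<omega>) \<and>
       (\<forall>\<Delta>. finite \<Delta> \<and> \<Lambda> \<subseteq> \<Delta> \<longrightarrow>
          (\<forall>A\<in>sets (Omega E). \<forall>\<omega>\<in>space (Omega E).
             kapply (\<gamma> \<Delta>) (kapply (\<gamma> \<Lambda>) (indicator A)) \<omega> = measure (\<gamma> \<Delta> \<omega>) A)))"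

end

theory Submission
  imports Defs
begin

lemma space_F_sub: "space (F_sub E U) = space (Omega E)"
  unfolding F_sub_def by (simp add: space_measure_of_conv)

lemma sets_F_sub: "sets (F_sub E U) \<subseteq> sets (Omega E)"
proof -
  have G: "{(\<lambda>\<omega>. \<omega> i) -` B \<inter> space (Omega E) | i B. i \<in> U \<and> B \<in> sets E} \<subseteq> sets (Omega E)"
  proof
    fix X assume "X \<in> {(\<lambda>\<omega>. \<omega> i) -` B \<inter> space (Omega E) | i B. i \<in> U \<and> B \<in> sets E}"
    then obtain i B where X: "X = (\<lambda>\<omega>. \<omega> i) -` B \<inter> space (Omega E)" and B: "B \<in> sets E" by blast
    have "(\<lambda>\<omega>. \<omega> i) \<in> measurable (Omega E) E"
      unfolding Omega_def by (rule measurable_component_singleton) simp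
    then show "X \<in> sets (Omega E)" using B X measurable_sets by blast
  qed
  have "G' \<subseteq> Pow (space (Omega E))" if "G' \<subseteq> sets (Omega E)" for G'
    using that sets.sets_into_space by blast
  with G show ?thesis
    unfolding F_sub_def
    by (simp add: sets_measure_of_conv sets.sigma_sets_subset)
qed

lemma meas_F_sub_Omega:
  assumes "h \<in> borel_measurable (F_sub E U)"
  shows "h \<in> borel_measurable (Omega E)"
  using assms sets_F_sub[of E U] space_F_sub[of E U]
  unfolding measurable_def by auto

context
  fixes E :: "'e measure"
    and \<gamma> :: "(int ^ 'd::finite) set \<Rightarrow> ('e, 'd) config \<Rightarrow> ('e, 'd) config measure"
  assumes spec: "is_specification E \<gamma>"
begin

abbreviation OM where "OM \<equiv> (Omega E :: ('e, 'd) config measure)"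

lemma spec_L: "finite L \<Longrightarrow>
       prob_kernel E (\<gamma> L) \<and>
       (\<forall>A\<in>sets OM. (\<lambda>\<omega>. measure (\<gamma> L \<omega>) A) \<in> borel_measurable (F_sub E (- L))) \<and>
       (\<forall>B\<in>sets (F_sub E (- L)). \<forall>\<omega>\<in>space OM. measure (\<gamma> L \<omega>) B = indicator B \<omega>) \<and>
       (\<forall>\<Delta>. finite \<Delta> \<and> L \<subseteq> \<Delta> \<longrightarrow>
          (\<forall>A\<in>sets OM. \<forall>\<omega>\<in>space OM.
             kapply (\<gamma> \<Delta>) (kapply (\<gamma> L) (indicator A)) \<omega> = measure (\<gamma> \<Delta> \<omega>) A))"
  using spec unfolding is_specification_def by (rule allE) (erule mp)

lemma pk: "finite L \<Longrightarrow> prob_kernel E (\<gamma> L)"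
  by (drule spec_L) (erule conjunct1)

lemma spec_meas: "finite L \<Longrightarrow> A \<in> sets OM \<Longrightarrow>
   (\<lambda>\<omega>. measure (\<gamma> L \<omega>) A) \<in> borel_measurable (F_sub E (- L))"
  by (drule spec_L, drule conjunct2, drule conjunct1) (erule bspec)

lemma spec_proper: "finite L \<Longrightarrow> B \<in> sets (F_sub E (- L)) \<Longrightarrow> \<omega> \<in> space OM \<Longrightarrow>
   measure (\<gamma> L \<omega>) B = indicator B \<omega>"
  by (drule spec_L, drule conjunct2, drule conjunct2, drule conjunct1, drule bspec, assumption, drule bspec, assumption)

lemma spec_cons: "finite L \<Longrightarrow> finite D \<Longrightarrow> L \<subseteq> D \<Longrightarrow> A \<in> sets OM \<Longrightarrow> \<omega> \<in> space OM \<Longrightarrow>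
   kapply (\<gamma> D) (kapply (\<gamma> L) (indicator A)) \<omega> = measure (\<gamma> D \<omega>) A"
proof -
  assume L: "finite L" and D: "finite D" and LD: "L \<subseteq> D" and A: "A \<in> sets OM" and w: "\<omega> \<in> space OM"
  have "\<forall>\<Delta>. finite \<Delta> \<and> L \<subseteq> \<Delta> \<longrightarrow>
          (\<forall>A\<in>sets OM. \<forall>\<omega>\<in>space OM.
             kapply (\<gamma> \<Delta>) (kapply (\<gamma> L) (indicator A)) \<omega> = measure (\<gamma> \<Delta> \<omega>) A)"
    using spec_L[OF L] by (elim conjE)
  then have "\<forall>A\<in>sets OM. \<forall>\<omega>\<in>space OM.
             kapply (\<gamma> D) (kapply (\<gamma> L) (indicator A)) \<omega> = measure (\<gamma> D \<omega>) A"
    using D LD by (elim allE impE) (rule conjI)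
  from this[rule_format, OF A w] show ?thesis .
qed

lemma ps: "finite L \<Longrightarrow> \<omega> \<in> space (OM) \<Longrightarrow> prob_space (\<gamma> L \<omega>)"
  by (drule pk, unfold prob_kernel_def, drule conjunct1, drule bspec, assumption, erule conjunct1)

lemma sts: "finite L \<Longrightarrow> \<omega> \<in> space (OM) \<Longrightarrow> sets (\<gamma> L \<omega>) = sets (OM)"
  by (drule pk, unfold prob_kernel_def, drule conjunct1, drule bspec, assumption, erule conjunct2)

lemma spc: "finite L \<Longrightarrow> \<omega> \<in> space (OM) \<Longrightarrow> space (\<gamma> L \<omega>) = space (OM)"
  by (rule sets_eq_imp_space_eq[OF sts])

lemma kern_meas:
  assumes L: "finite L"
  shows "\<gamma> L \<in> measurable (F_sub E (- L)) (subprob_algebra (OM))"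
proof (rule measurable_subprob_algebra)
  fix a assume "a \<in> space (F_sub E (- L))"
  then have a: "a \<in> space (OM)" by (simp add: space_F_sub)
  show "subprob_space (\<gamma> L a)" using ps[OF L a] prob_space_imp_subprob_space by blast
  show "sets (\<gamma> L a) = sets (OM)" using sts[OF L a] .
next
  fix A assume A: "A \<in> sets (OM)"
  have m: "(\<lambda>\<omega>. measure (\<gamma> L \<omega>) A) \<in> borel_measurable (F_sub E (- L))"
    using spec_meas L A by blast
  have m2: "(\<lambda>\<omega>. ennreal (measure (\<gamma> L \<omega>) A)) \<in> borel_measurable (F_sub E (- L))"
    using m by (rule measurable_compose) simp
  have eq: "emeasure (\<gamma> L \<omega>) A = ennreal (measure (\<gamma> L \<omega>) A)" if "\<omega> \<in> space (F_sub E (- L))" for \<omega>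
  proof -
    have "\<omega> \<in> space (OM)" using that by (simp add: space_F_sub)
    then interpret prob_space "\<gamma> L \<omega>" using ps[OF L] by blast
    show ?thesis by (simp add: emeasure_eq_measure)
  qed
  show "(\<lambda>a. emeasure (\<gamma> L a) A) \<in> borel_measurable (F_sub E (- L))"
    using measurable_cong[of "F_sub E (- L)" "\<lambda>a. emeasure (\<gamma> L a) A" "\<lambda>\<omega>. ennreal (measure (\<gamma> L \<omega>) A)", OF eq] m2
    by blast
qed

lemma kern_meas2:
  assumes L: "finite L"
  shows "\<gamma> L \<in> measurable (OM) (subprob_algebra (OM))"
  using kern_meas[OF L] sets_F_sub[of E "-L"] space_F_sub[of E "-L"]
  unfolding measurable_def by auto

lemma kapply_meas:
  assumes L: "finite L" and h: "h \<in> borel_measurable (OM)"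
  shows "kapply (\<gamma> L) h \<in> borel_measurable (F_sub E (- L))"
proof -
  have "kapply (\<gamma> L) h = (\<lambda>M. integral\<^sup>L M h) \<circ> \<gamma> L"
    by (auto simp: kapply_def)
  then show ?thesis
    using measurable_comp[OF kern_meas[OF L] integral_measurable_subprob_algebra[OF h]] by simp
qed

lemma kapply_meas2:
  assumes L: "finite L" and h: "h \<in> borel_measurable (OM)"
  shows "kapply (\<gamma> L) h \<in> borel_measurable (OM)"
  using meas_F_sub_Omega[OF kapply_meas[OF L h]] .

lemma integrable_bdd:
  assumes L: "finite L" and w: "\<omega> \<in> space (OM)"
    and h: "h \<in> borel_measurable (OM)" and C: "\<forall>x\<in>space (OM). \<bar>h x\<bar> \<le> (C::real)"
  shows "integrable (\<gamma> L \<omega>) h"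
proof -
  interpret prob_space "\<gamma> L \<omega>" using ps[OF L w] .
  show ?thesis
    apply (rule integrable_const_bound[where B=C])
    using C spc[OF L w] apply (auto intro!: AE_I2)[1]
    using h measurable_cong_sets[OF sts[OF L w] refl] by blast
qed

lemma kapply_bdd:
  assumes L: "finite L" and w: "\<omega> \<in> space (OM)"
    and h: "h \<in> borel_measurable (OM)" and C: "\<forall>x\<in>space (OM). \<bar>h x\<bar> \<le> (C::real)"
  shows "\<bar>kapply (\<gamma> L) h \<omega>\<bar> \<le> C"
proof -
  interpret prob_space "\<gamma> L \<omega>" using ps[OF L w] .
  have i: "integrable (\<gamma> L \<omega>) h" by (rule integrable_bdd[OF L w h C])
  have "integral\<^sup>L (\<gamma> L \<omega>) h \<le> C"
    using C spc[OF L w] by (intro integral_le_const[OF i] AE_I2) (auto simp: abs_le_iff)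
  moreover have "- C \<le> integral\<^sup>L (\<gamma> L \<omega>) h"
    using C spc[OF L w] by (intro integral_ge_const[OF i] AE_I2) (auto simp: abs_le_iff)
  ultimately show ?thesis by (simp add: kapply_def)
qed

lemma bind_eq:
  assumes L: "finite L" and D: "finite D" and LD: "L \<subseteq> D" and w: "\<omega> \<in> space (OM)"
  shows "bind (\<gamma> D \<omega>) (\<gamma> L) = \<gamma> D \<omega>"
proof -
  have ne: "space (\<gamma> D \<omega>) \<noteq> {}" using spc[OF D w] w by auto
  have km: "\<gamma> L \<in> measurable (\<gamma> D \<omega>) (subprob_algebra (OM))"
    using kern_meas2[OF L] measurable_cong_sets[OF sts[OF D w] refl] by blast
  show ?thesis
  proof (rule measure_eqI)
    have "\<And>x. x \<in> space (\<gamma> D \<omega>) \<Longrightarrow> sets (\<gamma> L x) = sets OM"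
      using sts[OF L] spc[OF D w] by blast
    then have "sets (bind (\<gamma> D \<omega>) (\<gamma> L)) = sets OM" by (rule sets_bind[OF _ ne])
    then show ss: "sets (bind (\<gamma> D \<omega>) (\<gamma> L)) = sets (\<gamma> D \<omega>)"
      using sts[OF D w] by (rule trans[OF _ sym])
    fix A assume "A \<in> sets (bind (\<gamma> D \<omega>) (\<gamma> L))"
    then have A: "A \<in> sets (OM)" using ss sts[OF D w] by simp
    have "emeasure (bind (\<gamma> D \<omega>) (\<gamma> L)) A = (\<integral>\<^sup>+x. emeasure (\<gamma> L x) A \<partial>\<gamma> D \<omega>)"
      by (rule emeasure_bind[OF ne km A])
    also have "\<dots> = (\<integral>\<^sup>+x. ennreal (kapply (\<gamma> L) (indicator A) x) \<partial>\<gamma> D \<omega>)"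
    proof (rule nn_integral_cong)
      fix x assume "x \<in> space (\<gamma> D \<omega>)"
      then have x: "x \<in> space (OM)" using spc[OF D w] by simp
      interpret prob_space "\<gamma> L x" using ps[OF L x] .
      have "A \<inter> space (\<gamma> L x) = A" using A spc[OF L x] sets.sets_into_space by blast
      then show "emeasure (\<gamma> L x) A = ennreal (kapply (\<gamma> L) (indicator A) x)"
        by (simp add: kapply_def emeasure_eq_measure)
    qed
    also have "\<dots> = ennreal (\<integral>x. kapply (\<gamma> L) (indicator A) x \<partial>\<gamma> D \<omega>)"
    proof (rule nn_integral_eq_integral)
      show "integrable (\<gamma> D \<omega>) (kapply (\<gamma> L) (indicator A))"
      proof -
        have im: "(indicator A :: _ \<Rightarrow> real) \<in> borel_measurable OM" using A by simp
        have i1: "\<forall>x\<in>space OM. \<bar>indicator A x :: real\<bar> \<le> 1" by (simp add: indicator_def)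
        have "\<forall>x\<in>space OM. \<bar>kapply (\<gamma> L) (indicator A) x\<bar> \<le> 1"
          using kapply_bdd[OF L _ im i1] by blast
        then show ?thesis by (rule integrable_bdd[OF D w kapply_meas2[OF L im]])
      qed
      show "AE x in \<gamma> D \<omega>. 0 \<le> kapply (\<gamma> L) (indicator A) x"
        by (rule AE_I2) (simp add: kapply_def)
    qed
    also have "\<dots> = ennreal (measure (\<gamma> D \<omega>) A)"
      using spec_cons[OF L D LD A w] by (simp add: kapply_def[of "\<gamma> D"])
    also have "\<dots> = emeasure (\<gamma> D \<omega>) A"
    proof -
      interpret prob_space "\<gamma> D \<omega>" using ps[OF D w] .
      show ?thesis by (simp add: emeasure_eq_measure)
    qed
    finally show "emeasure (bind (\<gamma> D \<omega>) (\<gamma> L)) A = emeasure (\<gamma> D \<omega>) A" .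
  qed
qed

lemma consist:
  assumes L: "finite L" and D: "finite D" and LD: "L \<subseteq> D" and w: "\<omega> \<in> space (OM)"
    and h: "h \<in> borel_measurable (OM)" and C: "\<forall>x\<in>space (OM). \<bar>h x\<bar> \<le> (C::real)"
  shows "kapply (\<gamma> D) (kapply (\<gamma> L) h) \<omega> = kapply (\<gamma> D) h \<omega>"
proof -
  have km: "\<gamma> L \<in> measurable (\<gamma> D \<omega>) (subprob_algebra (OM))"
    using kern_meas2[OF L] measurable_cong_sets[OF sts[OF D w] refl] by blast
  have "integral\<^sup>L (bind (\<gamma> D \<omega>) (\<gamma> L)) h = (\<integral>x. integral\<^sup>L (\<gamma> L x) h \<partial>\<gamma> D \<omega>)"
    apply (rule integral_bind[OF h _ km, where B=C and B'=1])
    using C apply simp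
    using ps[OF D w] prob_space.finite_measure apply blast
    apply (rule AE_I2)
    using spc[OF D w] ps[OF L] prob_space.emeasure_space_1 by fastforce
  then show ?thesis using bind_eq[OF L D LD w] by (simp add: kapply_def)
qed

lemma pullout:
  assumes L: "finite L" and w: "\<omega> \<in> space (OM)"
    and f: "f \<in> borel_measurable (OM)"
    and h: "h \<in> borel_measurable (F_sub E (- L))"
  shows "kapply (\<gamma> L) (\<lambda>\<eta>. f \<eta> * h \<eta>) \<omega> = kapply (\<gamma> L) f \<omega> * h \<omega>"
proof -
  define S where "S = {\<eta> \<in> space (OM). h \<eta> \<noteq> h \<omega>}"
  have S1: "S \<in> sets (F_sub E (- L))"
  proof -
    have "{\<eta> \<in> space (F_sub E (- L)). h \<eta> \<noteq> h \<omega>} \<in> sets (F_sub E (- L))"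
      using h by measurable
    then show ?thesis by (simp add: S_def space_F_sub)
  qed
  have "measure (\<gamma> L \<omega>) S = indicator S \<omega>"
    using spec_proper[OF L S1 w] .
  then have m0: "measure (\<gamma> L \<omega>) S = 0" by (simp add: S_def)
  have S2: "S \<in> sets (\<gamma> L \<omega>)" using S1 sets_F_sub sts[OF L w] by blast
  interpret prob_space "\<gamma> L \<omega>" using ps[OF L w] .
  have "S \<in> null_sets (\<gamma> L \<omega>)" using S2 m0 by (simp add: emeasure_eq_measure null_sets_def)
  then have ae: "AE \<eta> in \<gamma> L \<omega>. h \<eta> = h \<omega>"
    by (rule AE_I') (auto simp: S_def spc[OF L w])
  have fm: "f \<in> borel_measurable (\<gamma> L \<omega>)"
    by (subst measurable_cong_sets[OF sts[OF L w] refl]) (rule f)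
  have hm: "h \<in> borel_measurable (\<gamma> L \<omega>)"
    by (subst measurable_cong_sets[OF sts[OF L w] refl]) (rule meas_F_sub_Omega[OF h])
  have ae2: "AE \<eta> in \<gamma> L \<omega>. f \<eta> * h \<eta> = f \<eta> * h \<omega>"
    using ae by (rule eventually_mono) simp
  have "integral\<^sup>L (\<gamma> L \<omega>) (\<lambda>\<eta>. f \<eta> * h \<eta>) = integral\<^sup>L (\<gamma> L \<omega>) (\<lambda>\<eta>. f \<eta> * h \<omega>)"
    by (rule integral_cong_AE[OF borel_measurable_times[OF fm hm] borel_measurable_times[OF fm borel_measurable_const] ae2])
  then show ?thesis by (simp add: kapply_def)
qed

lemma swap:
  assumes L: "finite L" and D: "finite D" and LD: "L \<subseteq> D" and w: "\<omega> \<in> space OM"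
    and f: "f \<in> borel_measurable OM" and Cf: "\<forall>x\<in>space OM. \<bar>f x\<bar> \<le> (C1::real)"
    and G: "G \<in> borel_measurable OM" and CG: "\<forall>x\<in>space OM. \<bar>G x\<bar> \<le> (C2::real)"
  shows "kapply (\<gamma> D) (\<lambda>\<eta>. f \<eta> * kapply (\<gamma> L) G \<eta>) \<omega>
       = kapply (\<gamma> D) (\<lambda>\<eta>. G \<eta> * kapply (\<gamma> L) f \<eta>) \<omega>"
proof -
  define F where "F = kapply (\<gamma> L) f"
  define H where "H = kapply (\<gamma> L) G"
  have Fm: "F \<in> borel_measurable (F_sub E (- L))" unfolding F_def by (rule kapply_meas[OF L f])
  have Hm: "H \<in> borel_measurable (F_sub E (- L))" unfolding H_def by (rule kapply_meas[OF L G])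
  have Fm2: "F \<in> borel_measurable OM" unfolding F_def by (rule kapply_meas2[OF L f])
  have Hm2: "H \<in> borel_measurable OM" unfolding H_def by (rule kapply_meas2[OF L G])
  have Fb: "\<forall>x\<in>space OM. \<bar>F x\<bar> \<le> C1" unfolding F_def using kapply_bdd[OF L _ f Cf] by blast
  have Hb: "\<forall>x\<in>space OM. \<bar>H x\<bar> \<le> C2" unfolding H_def using kapply_bdd[OF L _ G CG] by blast
  have bnd: "\<bar>a x * b x\<bar> \<le> \<bar>A\<bar> * \<bar>B\<bar>"
    if "\<forall>x\<in>space OM. \<bar>a x\<bar> \<le> (A::real)" "\<forall>x\<in>space OM. \<bar>b x\<bar> \<le> (B::real)" "x \<in> space OM"
    for a b :: "_ \<Rightarrow> real" and A B x
  proof -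
    have "\<bar>a x\<bar> \<le> \<bar>A\<bar>" "\<bar>b x\<bar> \<le> \<bar>B\<bar>" using that by force+
    then show ?thesis unfolding abs_mult by (intro mult_mono) auto
  qed
  have fH_m: "(\<lambda>\<eta>. f \<eta> * H \<eta>) \<in> borel_measurable OM" using f Hm2 by (rule borel_measurable_times)
  have GF_m: "(\<lambda>\<eta>. G \<eta> * F \<eta>) \<in> borel_measurable OM" using G Fm2 by (rule borel_measurable_times)
  have fH_b: "\<forall>x\<in>space OM. \<bar>f x * H x\<bar> \<le> \<bar>C1\<bar> * \<bar>C2\<bar>" using bnd[OF Cf Hb] by blast
  have GF_b: "\<forall>x\<in>space OM. \<bar>G x * F x\<bar> \<le> \<bar>C2\<bar> * \<bar>C1\<bar>" using bnd[OF CG Fb] by blast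
  have pt: "kapply (\<gamma> L) (\<lambda>\<eta>. f \<eta> * H \<eta>) x = kapply (\<gamma> L) (\<lambda>\<eta>. G \<eta> * F \<eta>) x"
    if x: "x \<in> space OM" for x
  proof -
    have "kapply (\<gamma> L) (\<lambda>\<eta>. f \<eta> * H \<eta>) x = F x * H x"
      unfolding F_def by (rule pullout[OF L x f Hm])
    also have "\<dots> = kapply (\<gamma> L) (\<lambda>\<eta>. G \<eta> * F \<eta>) x"
      using pullout[OF L x G Fm] unfolding H_def by simp
    finally show ?thesis .
  qed
  have "kapply (\<gamma> D) (\<lambda>\<eta>. f \<eta> * H \<eta>) \<omega> = kapply (\<gamma> D) (kapply (\<gamma> L) (\<lambda>\<eta>. f \<eta> * H \<eta>)) \<omega>"
    by (rule sym, rule consist[OF L D LD w fH_m fH_b])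
  also have "\<dots> = kapply (\<gamma> D) (kapply (\<gamma> L) (\<lambda>\<eta>. G \<eta> * F \<eta>)) \<omega>"
    unfolding kapply_def[of "\<gamma> D"]
    by (rule Bochner_Integration.integral_cong[OF refl]) (use pt spc[OF D w] in auto)
  also have "\<dots> = kapply (\<gamma> D) (\<lambda>\<eta>. G \<eta> * F \<eta>) \<omega>"
    by (rule consist[OF L D LD w GF_m GF_b])
  finally show ?thesis unfolding F_def H_def .
qed

end

theorem lemma6p2:
  fixes E :: "'e measure"
    and \<gamma> :: "(int ^ 'd::finite) set \<Rightarrow> ('e, 'd) config \<Rightarrow> ('e, 'd) config measure"
    and \<Lambda> \<Gamma> :: "(int ^ 'd) set"
    and f g :: "('e, 'd) config \<Rightarrow> real"
  assumes "is_specification E \<gamma>"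
    and "finite \<Lambda>"
    and "finite \<Gamma>" and "\<Gamma> \<subseteq> - \<Lambda>"
    and "f \<in> borel_measurable (Omega E)" and "\<exists>C. \<forall>\<omega>\<in>space (Omega E). \<bar>f \<omega>\<bar> \<le> C"
    and "g \<in> borel_measurable (Omega E)" and "\<exists>C. \<forall>\<omega>\<in>space (Omega E). \<bar>g \<omega>\<bar> \<le> C"
  shows "\<forall>\<omega>\<in>space (Omega E).
    kapply (\<gamma> (\<Lambda> \<union> \<Gamma>)) (\<lambda>\<eta>. f \<eta> * kapply (\<gamma> \<Lambda>) (kapply (\<gamma> \<Gamma>) g) \<eta>) \<omega> =
    kapply (\<gamma> (\<Lambda> \<union> \<Gamma>)) (\<lambda>\<eta>. g \<eta> * kapply (\<gamma> \<Gamma>) (kapply (\<gamma> \<Lambda>) f) \<eta>) \<omega>"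
proof
  fix \<omega> :: "('e, 'd) config" assume w: "\<omega> \<in> space (Omega E)"
  note sp = assms(1)
  obtain Cf where Cf: "\<forall>\<omega>\<in>space (Omega E). \<bar>f \<omega>\<bar> \<le> Cf" using assms(6) by blast
  obtain Cg where Cg: "\<forall>\<omega>\<in>space (Omega E). \<bar>g \<omega>\<bar> \<le> Cg" using assms(8) by blast
  have L: "finite \<Lambda>" and G: "finite \<Gamma>" and D: "finite (\<Lambda> \<union> \<Gamma>)" using assms(2,3) by auto
  have Gm: "kapply (\<gamma> \<Gamma>) g \<in> borel_measurable (Omega E)" by (rule kapply_meas2[OF sp G assms(7)])
  have Gb: "\<forall>x\<in>space (Omega E). \<bar>kapply (\<gamma> \<Gamma>) g x\<bar> \<le> Cg" using kapply_bdd[OF sp G _ assms(7) Cg] by blast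
  have Fm: "kapply (\<gamma> \<Lambda>) f \<in> borel_measurable (Omega E)" by (rule kapply_meas2[OF sp L assms(5)])
  have Fb: "\<forall>x\<in>space (Omega E). \<bar>kapply (\<gamma> \<Lambda>) f x\<bar> \<le> Cf" using kapply_bdd[OF sp L _ assms(5) Cf] by blast
  have 1: "kapply (\<gamma> (\<Lambda> \<union> \<Gamma>)) (\<lambda>\<eta>. f \<eta> * kapply (\<gamma> \<Lambda>) (kapply (\<gamma> \<Gamma>) g) \<eta>) \<omega>
     = kapply (\<gamma> (\<Lambda> \<union> \<Gamma>)) (\<lambda>\<eta>. kapply (\<gamma> \<Gamma>) g \<eta> * kapply (\<gamma> \<Lambda>) f \<eta>) \<omega>"
    by (rule swap[OF sp L D _ w assms(5) Cf Gm Gb]) simp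
  have 2: "kapply (\<gamma> (\<Lambda> \<union> \<Gamma>)) (\<lambda>\<eta>. g \<eta> * kapply (\<gamma> \<Gamma>) (kapply (\<gamma> \<Lambda>) f) \<eta>) \<omega>
     = kapply (\<gamma> (\<Lambda> \<union> \<Gamma>)) (\<lambda>\<eta>. kapply (\<gamma> \<Lambda>) f \<eta> * kapply (\<gamma> \<Gamma>) g \<eta>) \<omega>"
    by (rule swap[OF sp G D _ w assms(7) Cg Fm Fb]) simp
  have 3: "(\<lambda>\<eta>. kapply (\<gamma> \<Gamma>) g \<eta> * kapply (\<gamma> \<Lambda>) f \<eta>) = (\<lambda>\<eta>. kapply (\<gamma> \<Lambda>) f \<eta> * kapply (\<gamma> \<Gamma>) g \<eta>)"
    by (rule ext) (rule mult.commute)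
  show "kapply (\<gamma> (\<Lambda> \<union> \<Gamma>)) (\<lambda>\<eta>. f \<eta> * kapply (\<gamma> \<Lambda>) (kapply (\<gamma> \<Gamma>) g) \<eta>) \<omega> =
    kapply (\<gamma> (\<Lambda> \<union> \<Gamma>)) (\<lambda>\<eta>. g \<eta> * kapply (\<gamma> \<Gamma>) (kapply (\<gamma> \<Lambda>) f) \<eta>) \<omega>"
    unfolding 1 2 3 ..
qed

end
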